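(* Let $n=2p$ with $p$ a positive integer, $a,b\in\mathbb{C}$, $b\ne0$, and let $A^{\dagger}$ be the $n\times n$ tridiagonal matrix with diagonal entries $a$ and $A^{\dagger}_{k,k+1}=A^{\dagger}_{k+1,k}=(-1)^{k+1}b$ for $k=1,\dots,n-1$. Let $\lambda_k^{\dagger}=a-2b\cos\left(\frac{k\pi}{n+1}\right)$, $\psi_k=\frac{\lambda_k^{\dagger}-a}{b}$ and $\eta_k=\frac{4-\psi_k^2}{2n+2}$ for $k=1,\dots,n$. Let $s$ be a nonnegative integer, or any integer if $A^{\dagger}$ is invertible. Then the entries $l_{ij}(s)$ of $(A^{\dagger})^s$ are $$l_{ij}(s)=\sum_{k=1}^{n}(\lambda_k^{\dagger})^{s}\eta_k\,r_{i-1}r_{j-1}\,U_{i-1}\left(\tfrac{\psi_k}{2}\right)U_{j-1}\left(\tfrac{\psi_k}{2}\right),\quad i,j=1,\dots,n.$$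
   Context: $U_m$ is the Chebyshev polynomial of the second kind: $U_0=1$, $U_1=2x$, $U_{m+1}=2xU_m-U_{m-1}$. For an integer $m\ge0$, $r_m=1$ if $m\equiv0,1\pmod4$ and $r_m=-1$ if $m\equiv2,3\pmod4$. *)

theory Defs
  imports Complex_Main "Jordan_Normal_Form.Matrix"
begin

fun chebU :: "nat \<Rightarrow> complex \<Rightarrow> complex" where
  "chebU 0 x = 1"
| "chebU (Suc 0) x = 2 * x"
| "chebU (Suc (Suc m)) x = 2 * x * chebU (Suc m) x - chebU m x"

definition rsign :: "nat \<Rightarrow> complex" where
  "rsign m = (if m mod 4 = 0 \<or> m mod 4 = 1 then 1 else -1)"

text \<open>The tridiagonal matrix A-dagger; JNF indices are 0-based, so the 1-based
  superdiagonal entry (k,k+1), k = i+1, equals (-1)^(k+1) b = (-1)^(i+2) b.\<close>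
definition Adag :: "nat \<Rightarrow> complex \<Rightarrow> complex \<Rightarrow> complex mat" where
  "Adag n a b = mat n n (\<lambda>(i,j).
     if i = j then a
     else if j = i + 1 then (-1) ^ (i + 2) * b
     else if i = j + 1 then (-1) ^ (j + 2) * b
     else 0)"

text \<open>Two-sided matrix inverse (meaningful when the matrix is invertible).\<close>
definition inv_mat :: "complex mat \<Rightarrow> complex mat" where
  "inv_mat A = (SOME B. inverts_mat A B \<and> inverts_mat B A)"

definition mat_pow_int :: "complex mat \<Rightarrow> int \<Rightarrow> complex mat" where
  "mat_pow_int A s = (if 0 \<le> s then A ^\<^sub>m nat s else (inv_mat A) ^\<^sub>m nat (- s))"

definition lam_dag :: "nat \<Rightarrow> complex \<Rightarrow> complex \<Rightarrow> nat \<Rightarrow> complex" where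
  "lam_dag n a b k = a - 2 * b * complex_of_real (cos (real k * pi / real (n + 1)))"

definition psi :: "nat \<Rightarrow> complex \<Rightarrow> complex \<Rightarrow> nat \<Rightarrow> complex" where
  "psi n a b k = (lam_dag n a b k - a) / b"

definition eta :: "nat \<Rightarrow> complex \<Rightarrow> complex \<Rightarrow> nat \<Rightarrow> complex" where
  "eta n a b k = (4 - (psi n a b k)^2) / (2 * of_nat n + 2)"

end

theory Submission
  imports Defs
begin


lemma tele: "2 * sin (x/2) * (\<Sum>k=1..m. cos (real k * x)) = sin ((real m + 1/2) * x) - sin (x/2)"
proof (induction m)
  case 0 then show ?case by simp
next
  case (Suc m)
  have "sin ((real m + 3/2) * x) - sin ((real m + 1/2) * x) = 2 * sin (x/2) * cos (real (Suc m) * x)"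
    by (subst sin_diff_sin) (simp add: algebra_simps add_divide_distrib)
  then show ?case using Suc by (simp add: algebra_simps)
qed

lemma cos_sum:
  fixes n m :: nat
  assumes "0 < m" "m < 2 * (n+1)"
  shows "(\<Sum>k=1..n. cos (real m * (real k * pi / real (n+1)))) = (if even m then -1 else 0)"
proof -
  define x where "x = real m * pi / real (n+1)"
  have s0: "sin (x/2) \<noteq> 0"
  proof -
    have "0 < x/2" using assms by (simp add: x_def)
    moreover have "x/2 < pi"
    proof -
      have "real m < real (2*(n+1))" using assms(2) by (simp only: of_nat_less_iff)
      then have "real m < 2*(real n+1)" by simp
      then have "real m * pi < 2*(real n+1) * pi" by simp
      then show ?thesis by (simp add: x_def field_simps)
    qed
    ultimately have "sin (x/2) > 0" by (intro sin_gt_zero) auto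
    then show ?thesis by simp
  qed
  have e: "(\<Sum>k=1..n. cos (real m * (real k * pi / real (n+1)))) = (\<Sum>k=1..n. cos (real k * x))"
    by (simp add: x_def algebra_simps)
  have "(real n + 1/2) * x = real m * pi - x/2" by (simp add: x_def field_simps)
  then have "sin ((real n + 1/2) * x) = - ((-1)^m) * sin (x/2)"
    by (simp add: sin_diff)
  then have "2 * sin (x/2) * (\<Sum>k=1..n. cos (real k * x)) = sin (x/2) * (- ((-1)^m) - 1)"
    using tele[of x n] by (simp add: algebra_simps)
  then have "sin (x/2) * (2 * (\<Sum>k=1..n. cos (real k * x))) = sin (x/2) * (- ((-1)^m) - 1)"
    by (simp only: mult.assoc mult.left_commute)
  then have "2 * (\<Sum>k=1..n. cos (real k * x)) = (- ((-1)^m) - 1)" using s0 by simp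
  then have "(\<Sum>k=1..n. cos (real k * x)) = (- ((-1)^m) - 1) / 2" by simp
  then show ?thesis unfolding e by (cases "even m") simp_all
qed

lemma sin_orth:
  fixes n a b :: nat
  assumes "1 \<le> a" "a \<le> n" "1 \<le> b" "b \<le> n"
  shows "(\<Sum>k=1..n. sin (real a * (real k * pi / real (n+1))) * sin (real b * (real k * pi / real (n+1))))
     = (if a = b then (real n + 1) / 2 else 0)"
proof -
  define t where "t = (\<lambda>k::nat. real k * pi / real (n+1))"
  have "(\<Sum>k=1..n. sin (real a * t k) * sin (real b * t k)) =
     ((\<Sum>k=1..n. cos ((real a - real b) * t k)) - (\<Sum>k=1..n. cos (real (a+b) * t k))) / 2"
    unfolding sum_subtractf[symmetric] sum_divide_distrib
    by (intro sum.cong refl) (simp add: sin_times_sin algebra_simps)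
  also have "(\<Sum>k=1..n. cos (real (a+b) * t k)) = (if even (a+b) then -1 else 0)"
    unfolding t_def using assms by (intro cos_sum) auto
  also have "(\<Sum>k=1..n. cos ((real a - real b) * t k)) =
      (if a = b then real n else (if even (a+b) then -1 else 0))"
  proof (cases "a = b")
    case True then show ?thesis by simp
  next
    case False
    show ?thesis
    proof (cases "a < b")
      case True
      have "(\<Sum>k=1..n. cos ((real a - real b) * t k)) = (\<Sum>k=1..n. cos (real (b - a) * t k))"
      proof (intro sum.cong refl)
        fix k
        have "(real a - real b) * t k = - (real (b - a) * t k)" using True by (simp add: of_nat_diff algebra_simps)
        then show "cos ((real a - real b) * t k) = cos (real (b - a) * t k)" by (simp only: cos_minus)
      qed
      also have "\<dots> = (if even (b - a) then -1 else 0)" unfolding t_def using assms True by (intro cos_sum) auto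
      finally show ?thesis using True False by auto
    next
      case nt: False
      have "(\<Sum>k=1..n. cos ((real a - real b) * t k)) = (\<Sum>k=1..n. cos (real (a - b) * t k))"
        using nt by (intro sum.cong) (auto simp: of_nat_diff)
      also have "\<dots> = (if even (a - b) then -1 else 0)" unfolding t_def using assms nt False by (intro cos_sum) auto
      finally show ?thesis using nt False by auto
    qed
  qed
  finally show ?thesis unfolding t_def by (cases "a = b") simp_all
qed



lemma chebU_sin0: "x = complex_of_real (cos t) \<Longrightarrow> chebU m x * complex_of_real (sin t) = complex_of_real (sin (real (Suc m) * t))"
proof (induction m x rule: chebU.induct)
  case (1 x) then show ?case by simp
next
  case (2 x) then show ?case by (simp add: sin_double)
next
  case (3 m x)
  have id: "sin (y + t) = 2 * sin y * cos t - sin (y - t)" for y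
    by (simp add: sin_add sin_diff)
  have "chebU (Suc (Suc m)) (complex_of_real (cos t)) * complex_of_real (sin t)
    = 2 * complex_of_real (cos t) * (chebU (Suc m) (complex_of_real (cos t)) * complex_of_real (sin t))
      - chebU m (complex_of_real (cos t)) * complex_of_real (sin t)"
    by (simp add: algebra_simps)
  also have "\<dots> = complex_of_real (2 * cos t * sin (real (Suc (Suc m)) * t) - sin (real (Suc m) * t))"
    using 3 by simp
  also have "2 * cos t * sin (real (Suc (Suc m)) * t) - sin (real (Suc m) * t) = sin (real (Suc (Suc (Suc m))) * t)"
    using id[of "real (Suc (Suc m)) * t"] by (simp add: algebra_simps)
  finally show ?case using "3.prems" by simp
qed

lemma chebU_sin: "chebU m (complex_of_real (cos t)) * complex_of_real (sin t) = complex_of_real (sin (real (Suc m) * t))"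
  using chebU_sin0 by blast

lemma chebU_neg: "chebU m (- x) = (-1)^m * chebU m x"
  by (induction m x rule: chebU.induct) (simp_all add: algebra_simps)

lemma rsign_Suc: "rsign (Suc i) = (-1)^i * rsign i"
proof -
  have p: "(-1::complex)^i = (-1)^(i mod 4)"
  proof -
    have "(-1::complex)^i = (-1)^(4 * (i div 4) + i mod 4)" by simp
    also have "\<dots> = ((-1)^4)^(i div 4) * (-1)^(i mod 4)" by (simp only: power_add power_mult)
    finally show ?thesis by simp
  qed
  have m: "Suc i mod 4 = (if i mod 4 = 3 then 0 else Suc (i mod 4))" by (simp add: mod_Suc)
  have "i mod 4 = 0 \<or> i mod 4 = 1 \<or> i mod 4 = 2 \<or> i mod 4 = 3" by arith
  then show ?thesis
  proof (elim disjE)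
    assume h: "i mod 4 = 0" show ?thesis unfolding rsign_def p m h by simp
  next
    assume h: "i mod 4 = 1" show ?thesis unfolding rsign_def p m h by simp
  next
    assume h: "i mod 4 = 2" show ?thesis unfolding rsign_def p m h by simp
  next
    assume h: "i mod 4 = 3" show ?thesis unfolding rsign_def p m h by simp
  qed
qed

lemma rsign_sq: "rsign i * rsign i = 1"
  unfolding rsign_def by simp



definition th :: "nat \<Rightarrow> nat \<Rightarrow> real" where
  "th n k = real k * pi / real (n+1)"

definition wv :: "nat \<Rightarrow> complex \<Rightarrow> complex \<Rightarrow> nat \<Rightarrow> nat \<Rightarrow> complex" where
  "wv n a b k i = rsign i * chebU i (psi n a b k / 2)"

lemma psi_eq: "b \<noteq> 0 \<Longrightarrow> psi n a b k = - 2 * complex_of_real (cos (th n k))"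
  unfolding psi_def lam_dag_def th_def by (simp add: field_simps)

lemma lam_eq: "b \<noteq> 0 \<Longrightarrow> lam_dag n a b k = a + b * psi n a b k"
  unfolding psi_def by (simp add: field_simps)

lemma wv_eq: "b \<noteq> 0 \<Longrightarrow> wv n a b k i = rsign i * (-1)^i * chebU i (complex_of_real (cos (th n k)))"
proof -
  assume b: "b \<noteq> 0"
  have "psi n a b k / 2 = - complex_of_real (cos (th n k))" using psi_eq[OF b] by simp
  then show ?thesis unfolding wv_def by (simp add: chebU_neg)
qed

lemma sin_th_nz: "1 \<le> k \<Longrightarrow> k \<le> n \<Longrightarrow> sin (th n k) \<noteq> 0"
proof -
  assume k: "1 \<le> k" "k \<le> n"
  have "0 < th n k" using k by (simp add: th_def)
  moreover have "th n k < pi"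
  proof -
    have "real k < real n + 1" using k by simp
    then have "real k * pi < (real n + 1) * pi" by simp
    then show ?thesis by (simp add: th_def field_simps)
  qed
  ultimately have "sin (th n k) > 0" by (intro sin_gt_zero)
  then show ?thesis by simp
qed

lemma chebU_n_zero: "1 \<le> k \<Longrightarrow> k \<le> n \<Longrightarrow> chebU n (complex_of_real (cos (th n k))) = 0"
proof -
  assume k: "1 \<le> k" "k \<le> n"
  have "real (Suc n) * th n k = real k * pi" by (simp add: th_def)
  then have "chebU n (complex_of_real (cos (th n k))) * complex_of_real (sin (th n k)) = 0"
    by (simp add: chebU_sin)
  then show ?thesis using sin_th_nz[OF k] by simp
qed

lemma wv_n_zero: "b \<noteq> 0 \<Longrightarrow> 1 \<le> k \<Longrightarrow> k \<le> n \<Longrightarrow> wv n a b k n = 0"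
  using wv_eq chebU_n_zero by simp

lemma Adag_idx: "i < n \<Longrightarrow> l < n \<Longrightarrow> Adag n a b $$ (i,l) =
  (if i = l then a else if l = i+1 then (-1)^(i+2)*b else if i = l+1 then (-1)^(l+2)*b else 0)"
  unfolding Adag_def by simp

lemma Adag_sym: "i < n \<Longrightarrow> l < n \<Longrightarrow> Adag n a b $$ (i,l) = Adag n a b $$ (l,i)"
  unfolding Adag_idx by auto

lemma eig:
  assumes b: "b \<noteq> 0" and i: "i < n" and k: "1 \<le> k" "k \<le> n"
  shows "(\<Sum>l\<in>{0..<n}. Adag n a b $$ (i,l) * wv n a b k l) = lam_dag n a b k * wv n a b k i"
proof -
  define w where "w = wv n a b k"
  define x where "x = psi n a b k / 2"
  have wdef: "w l = rsign l * chebU l x" for l unfolding w_def x_def wv_def by simp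
  have "(\<Sum>l\<in>{0..<n}. Adag n a b $$ (i,l) * w l) =
     (\<Sum>l\<in>{0..<n}. (if l = i then a * w l else 0) + (if l = Suc i then (-1)^i*b*w l else 0)
        + (if Suc l = i then (-1)^l * b * w l else 0))"
    using i by (intro sum.cong refl) (auto simp: Adag_idx)
  also have "\<dots> = a * w i + (if Suc i < n then (-1)^i*b*w (Suc i) else 0)
     + (\<Sum>l\<in>{0..<n}. if Suc l = i then (-1)^l * b * w l else 0)"
    using i by (simp add: sum.distrib)
  also have "(if Suc i < n then (-1)^i*b*w (Suc i) else 0) = (-1)^i*b*w (Suc i)"
    using i wv_n_zero[OF b k] unfolding w_def by (cases "Suc i = n") auto
  also have "(\<Sum>l\<in>{0..<n}. if Suc l = i then (-1)^l * b * w l else 0) =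
     (if i = 0 then 0 else (-1)^(i-1) * b * w (i-1))"
  proof (cases i)
    case 0 then show ?thesis by simp
  next
    case (Suc m)
    have "(\<Sum>l\<in>{0..<n}. if Suc l = i then (-1)^l * b * w l else 0) =
        (\<Sum>l\<in>{0..<n}. if l = m then (-1)^l * b * w l else 0)"
      using Suc by (intro sum.cong refl) auto
    also have "\<dots> = (-1)^m * b * w m" using Suc i by simp
    finally show ?thesis using Suc by simp
  qed
  also have "a * w i + (-1)^i*b*w (Suc i) + (if i = 0 then 0 else (-1)^(i-1) * b * w (i-1))
      = (a + b * (2 * x)) * w i"
  proof (cases i)
    case 0 then show ?thesis by (simp add: wdef rsign_def algebra_simps)
  next
    case (Suc m)
    have pm: "(-1::complex)^m * (-1)^m = 1" by (simp flip: power_add)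
    have "(-1::complex)^(Suc m) * ((-1)^(Suc m) * X) = X" for X
      by (simp flip: power_add)
    then show ?thesis using Suc pm
      by (simp add: wdef rsign_Suc algebra_simps)
  qed
  also have "a + b * (2 * x) = lam_dag n a b k" using lam_eq[OF b] by (simp add: x_def)
  finally show ?thesis unfolding w_def .
qed



lemma nz1: "(of_nat n + 1 :: complex) \<noteq> 0"
  by (metis of_nat_Suc of_nat_eq_0_iff add.commute nat.distinct(1))

lemma orth:
  assumes b: "b \<noteq> 0" and i: "i < n" and j: "j < n"
  shows "(\<Sum>k=1..n. eta n a b k * wv n a b k i * wv n a b k j) = (if i = j then 1 else 0)"
proof -
  define C where "C = 2 / (of_nat n + 1) * (rsign i * (-1)^i) * (rsign j * (-1)^j :: complex)"
  have pt: "eta n a b k * wv n a b k i * wv n a b k j =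
      C * complex_of_real (sin (real (Suc i) * th n k) * sin (real (Suc j) * th n k))" for k
  proof -
    have e: "eta n a b k = 2 / (of_nat n + 1) * complex_of_real (sin (th n k)) * complex_of_real (sin (th n k))"
    proof -
      have "4 - (psi n a b k)^2 = 4 * complex_of_real (1 - (cos (th n k))^2)"
        using psi_eq[OF b] by (simp add: power2_eq_square algebra_simps)
      also have "1 - (cos (th n k))^2 = sin (th n k) * sin (th n k)"
        using sin_cos_squared_add3[of "th n k"] unfolding power2_eq_square by linarith
      finally have h: "4 - (psi n a b k)^2 = 4 * (complex_of_real (sin (th n k)) * complex_of_real (sin (th n k)))"
        by simp
      have d: "(2 * of_nat n + 2 :: complex) = 2 * (of_nat n + 1)" by simp
      have g: "\<And>X S::complex. X \<noteq> 0 \<Longrightarrow> 4*S/(2*X) = 2/X*S" by (simp add: field_simps)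
      show ?thesis unfolding eta_def h d using g[OF nz1] by (simp only: mult.assoc)
    qed
    show ?thesis
      unfolding e wv_eq[OF b] C_def of_real_mult chebU_sin[symmetric]
      by (simp only: mult_ac)
  qed
  have "(\<Sum>k=1..n. eta n a b k * wv n a b k i * wv n a b k j) =
     (\<Sum>k=1..n. C * complex_of_real (sin (real (Suc i) * th n k) * sin (real (Suc j) * th n k)))"
    by (rule sum.cong[OF refl pt])
  also have "\<dots> = C * complex_of_real (\<Sum>k=1..n. sin (real (Suc i) * (real k * pi / real (n+1))) * sin (real (Suc j) * (real k * pi / real (n+1))))"
    by (simp only: of_real_sum sum_distrib_left th_def)
  also have "\<dots> = C * complex_of_real (if Suc i = Suc j then (real n + 1) / 2 else 0)"
    using i j by (subst sin_orth) auto
  also have "\<dots> = (if i = j then 1 else 0)"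
  proof (cases "i = j")
    case True
    have "(rsign i * (-1)^i) * (rsign i * (-1)^i) = (1::complex)"
      using rsign_sq[of i] by (simp add: algebra_simps flip: power_add)
    then have "C = 2 / (of_nat n + 1)" unfolding C_def using True by (simp only: mult.assoc mult_1_right)
    moreover have "complex_of_real ((real n + 1) / 2) = (of_nat n + 1) / 2" by simp
    ultimately have "C * complex_of_real ((real n + 1) / 2) = 2 / (of_nat n + 1) * ((of_nat n + 1) / 2)"
      by (simp only:)
    also have "\<dots> = 1"
    proof -
      have g: "\<And>X::complex. X \<noteq> 0 \<Longrightarrow> 2/X * (X/2) = 1" by simp
      show ?thesis by (rule g[OF nz1])
    qed
    finally show ?thesis using True by simp
  qed simp
  finally show ?thesis .
qed

definition Mm :: "nat \<Rightarrow> complex \<Rightarrow> complex \<Rightarrow> int \<Rightarrow> complex mat" where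
  "Mm n a b s = mat n n (\<lambda>(i,j). \<Sum>k=1..n. lam_dag n a b k powi s * eta n a b k * wv n a b k i * wv n a b k j)"

lemma Mm0: assumes b: "b \<noteq> 0" shows "Mm n a b 0 = 1\<^sub>m n"
proof (rule eq_matI)
  fix i j assume "i < dim_row (1\<^sub>m n :: complex mat)" "j < dim_col (1\<^sub>m n :: complex mat)"
  then have i: "i < n" and j: "j < n" by auto
  show "Mm n a b 0 $$ (i, j) = 1\<^sub>m n $$ (i, j)"
    using orth[OF b i j, of a] i j by (simp add: Mm_def)
qed (auto simp: Mm_def)

lemma dim_Adag[simp]: "dim_row (Adag n a b) = n" "dim_col (Adag n a b) = n"
  unfolding Adag_def by simp_all

lemma Adag_carrier[simp]: "Adag n a b \<in> carrier_mat n n"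
  unfolding Adag_def by simp

lemma Mm_carrier[simp]: "Mm n a b s \<in> carrier_mat n n"
  unfolding Mm_def by simp

lemma Mm_step:
  assumes b: "b \<noteq> 0" and H: "0 \<le> s \<or> (\<forall>k\<in>{1..n}. lam_dag n a b k \<noteq> 0)"
  shows "Adag n a b * Mm n a b s = Mm n a b (s + 1)"
proof (rule eq_matI)
  fix i j assume ij: "i < dim_row (Mm n a b (s+1))" "j < dim_col (Mm n a b (s+1))"
  then have i: "i < n" and j: "j < n" by (auto simp: Mm_def)
  let ?A = "Adag n a b"
  have "(?A * Mm n a b s) $$ (i,j) = (\<Sum>l\<in>{0..<n}. ?A $$ (i,l) *
      (\<Sum>k=1..n. lam_dag n a b k powi s * eta n a b k * wv n a b k l * wv n a b k j))"
    using i j by (simp add: scalar_prod_def Mm_def)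
  also have "\<dots> = (\<Sum>k=1..n. lam_dag n a b k powi s * eta n a b k * wv n a b k j *
      (\<Sum>l\<in>{0..<n}. ?A $$ (i,l) * wv n a b k l))"
  proof -
    have "(\<Sum>l\<in>{0..<n}. ?A $$ (i,l) *
      (\<Sum>k=1..n. lam_dag n a b k powi s * eta n a b k * wv n a b k l * wv n a b k j))
      = (\<Sum>l\<in>{0..<n}. \<Sum>k=1..n. ?A $$ (i,l) * (lam_dag n a b k powi s * eta n a b k * wv n a b k l * wv n a b k j))"
      by (simp only: sum_distrib_left)
    also have "\<dots> = (\<Sum>k=1..n. \<Sum>l\<in>{0..<n}. ?A $$ (i,l) * (lam_dag n a b k powi s * eta n a b k * wv n a b k l * wv n a b k j))"
      by (rule sum.swap)
    also have "\<dots> = (\<Sum>k=1..n. \<Sum>l\<in>{0..<n}. (lam_dag n a b k powi s * eta n a b k * wv n a b k j) * (?A $$ (i,l) * wv n a b k l))"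
      by (simp only: mult_ac)
    also have "\<dots> = (\<Sum>k=1..n. lam_dag n a b k powi s * eta n a b k * wv n a b k j *
      (\<Sum>l\<in>{0..<n}. ?A $$ (i,l) * wv n a b k l))"
      by (simp only: sum_distrib_left)
    finally show ?thesis .
  qed
  also have "\<dots> = (\<Sum>k=1..n. lam_dag n a b k powi (s+1) * eta n a b k * wv n a b k i * wv n a b k j)"
  proof (intro sum.cong refl)
    fix k assume k: "k \<in> {1..n}"
    have p: "lam_dag n a b k powi (s+1) = lam_dag n a b k powi s * lam_dag n a b k"
      using H k by (intro power_int_add_1) auto
    show "lam_dag n a b k powi s * eta n a b k * wv n a b k j *
      (\<Sum>l\<in>{0..<n}. ?A $$ (i,l) * wv n a b k l) =
      lam_dag n a b k powi (s+1) * eta n a b k * wv n a b k i * wv n a b k j"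
    proof -
      have e: "(\<Sum>l\<in>{0..<n}. ?A $$ (i,l) * wv n a b k l) = lam_dag n a b k * wv n a b k i"
        using eig[OF b i, of k a] k by auto
      show ?thesis unfolding p e by (simp only: mult_ac)
    qed
  qed
  also have "\<dots> = Mm n a b (s+1) $$ (i,j)" using i j by (simp add: Mm_def)
  finally show "(?A * Mm n a b s) $$ (i,j) = Mm n a b (s+1) $$ (i,j)" .
qed (auto simp: Mm_def)



lemma pow_comm: "A \<in> carrier_mat n n \<Longrightarrow> A * (A ^\<^sub>m m) = (A ^\<^sub>m m) * A"
proof (induction m)
  case 0 then show ?case by (simp add: left_mult_one_mat right_mult_one_mat carrier_matD)
next
  case (Suc m)
  have c: "A ^\<^sub>m m \<in> carrier_mat n n" using Suc.prems by simp
  have "A * (A ^\<^sub>m Suc m) = A * (A ^\<^sub>m m * A)" by simp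
  also have "\<dots> = (A * A ^\<^sub>m m) * A" by (rule assoc_mult_mat[symmetric]) (use Suc.prems c in auto)
  also have "\<dots> = (A ^\<^sub>m m * A) * A" using Suc by simp
  finally show ?case by simp
qed

lemma pow_nonneg: "b \<noteq> 0 \<Longrightarrow> Adag n a b ^\<^sub>m m = Mm n a b (int m)"
proof (induction m)
  case 0 then show ?case by (simp add: Mm0)
next
  case (Suc m)
  have "Adag n a b ^\<^sub>m Suc m = Adag n a b * Adag n a b ^\<^sub>m m"
    using pow_comm[OF Adag_carrier] by simp
  also have "\<dots> = Mm n a b (int m + 1)" using Suc by (simp add: Mm_step)
  finally show ?case by (simp add: add.commute)
qed

lemma lam_nz:
  assumes b: "b \<noteq> 0" and n: "0 < n" and inv: "invertible_mat (Adag n a b)"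
    and k: "k \<in> {1..n}"
  shows "lam_dag n a b k \<noteq> 0"
proof
  assume z: "lam_dag n a b k = 0"
  let ?A = "Adag n a b"
  obtain B where AB: "inverts_mat ?A B" and BA: "inverts_mat B ?A" using inv unfolding invertible_mat_def by auto
  have BA1: "B * ?A = 1\<^sub>m (dim_row B)" using BA unfolding inverts_mat_def .
  have AB1: "?A * B = 1\<^sub>m n" using AB unfolding inverts_mat_def by simp
  have dcB: "dim_col B = n" using arg_cong[OF AB1, of dim_col] by simp
  have drB: "dim_row B = n" using arg_cong[OF BA1, of dim_col] by simp
  have Bc: "B \<in> carrier_mat n n" using dcB drB by auto
  define v where "v = vec n (wv n a b k)"
  have vc: "v \<in> carrier_vec n" unfolding v_def by simp
  have Av: "?A *\<^sub>v v = 0\<^sub>v n"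
  proof (rule eq_vecI)
    fix i assume "i < dim_vec (0\<^sub>v n :: complex vec)"
    then have i: "i < n" by simp
    have "(?A *\<^sub>v v) $ i = (\<Sum>l\<in>{0..<n}. ?A $$ (i,l) * wv n a b k l)"
      using i by (simp add: v_def scalar_prod_def)
    also have "\<dots> = 0" using eig[OF b i, of k a] k z by simp
    finally show "(?A *\<^sub>v v) $ i = 0\<^sub>v n $ i" using i by simp
  qed simp
  have "v = (B * ?A) *\<^sub>v v" using BA1 drB vc by simp
  also have "\<dots> = B *\<^sub>v (?A *\<^sub>v v)" using Bc vc by (simp add: assoc_mult_mat_vec[of _ n n _ n])
  also have "\<dots> = 0\<^sub>v n" unfolding Av
    by (rule eq_vecI) (use Bc in auto)
  finally have "v $ 0 = 0" using n by simp
  moreover have "v $ 0 = 1" using n unfolding v_def wv_def rsign_def by simp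
  ultimately show False by simp
qed

lemma inv_mat_props:
  assumes inv: "invertible_mat (Adag n a b)"
  shows "Adag n a b * inv_mat (Adag n a b) = 1\<^sub>m n" "inv_mat (Adag n a b) * Adag n a b = 1\<^sub>m n"
    "inv_mat (Adag n a b) \<in> carrier_mat n n"
proof -
  let ?A = "Adag n a b"
  have ex: "\<exists>B. inverts_mat ?A B \<and> inverts_mat B ?A" using inv unfolding invertible_mat_def by auto
  have h: "inverts_mat ?A (inv_mat ?A) \<and> inverts_mat (inv_mat ?A) ?A"
    unfolding inv_mat_def by (rule someI_ex[OF ex])
  define B where "B = inv_mat ?A"
  have BA1: "B * ?A = 1\<^sub>m (dim_row B)" using h unfolding inverts_mat_def B_def by simp
  have AB1: "?A * B = 1\<^sub>m n" using h unfolding inverts_mat_def B_def by simp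
  have dcB: "dim_col B = n" using arg_cong[OF AB1, of dim_col] by simp
  have drB: "dim_row B = n" using arg_cong[OF BA1, of dim_col] by simp
  show "?A * inv_mat ?A = 1\<^sub>m n" using AB1 B_def by simp
  show "inv_mat ?A * ?A = 1\<^sub>m n" using BA1 drB B_def by simp
  show "inv_mat ?A \<in> carrier_mat n n" using dcB drB B_def by auto
qed

lemma pow_neg:
  assumes b: "b \<noteq> 0" and n: "0 < n" and inv: "invertible_mat (Adag n a b)"
  shows "inv_mat (Adag n a b) ^\<^sub>m m = Mm n a b (- int m)"
proof (induction m)
  case 0
  have "dim_row (inv_mat (Adag n a b)) = n" using inv_mat_props(3)[OF inv] by auto
  then show ?case by (simp add: Mm0[OF b])
next
  case (Suc m)
  let ?A = "Adag n a b" and ?B = "inv_mat (Adag n a b)"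
  have Bc: "?B \<in> carrier_mat n n" by (rule inv_mat_props(3)[OF inv])
  have H: "\<forall>k\<in>{1..n}. lam_dag n a b k \<noteq> 0" using lam_nz[OF b n inv] by blast
  have st: "?A * Mm n a b (- int (Suc m)) = Mm n a b (- int m)"
    using Mm_step[OF b, of "- int (Suc m)" n a] H by simp
  have "?B ^\<^sub>m Suc m = ?B * ?B ^\<^sub>m m" using pow_comm[OF Bc] by simp
  also have "\<dots> = ?B * (?A * Mm n a b (- int (Suc m)))" using Suc st by simp
  also have "\<dots> = (?B * ?A) * Mm n a b (- int (Suc m))"
    by (rule assoc_mult_mat[symmetric, of _ n n _ n _ n]) (use Bc in auto)
  also have "\<dots> = Mm n a b (- int (Suc m))" using inv_mat_props(2)[OF inv]
    by (simp add: left_mult_one_mat[OF Mm_carrier])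
  finally show ?case .
qed

theorem mainTheorem4:
  fixes p n :: nat and a b :: complex and s :: int and i j :: nat
  assumes "p > 0" and "n = 2 * p" and "b \<noteq> 0"
    and "0 \<le> s \<or> invertible_mat (Adag n a b)"
    and "i \<in> {1..n}" and "j \<in> {1..n}"
  shows "mat_pow_int (Adag n a b) s $$ (i - 1, j - 1) =
    (\<Sum>k = 1..n. (lam_dag n a b k) powi s * eta n a b k
        * rsign (i - 1) * rsign (j - 1)
        * chebU (i - 1) (psi n a b k / 2) * chebU (j - 1) (psi n a b k / 2))"
proof -
  have n: "0 < n" using assms(1,2) by simp
  have M: "mat_pow_int (Adag n a b) s = Mm n a b s"
  proof (cases "0 \<le> s")
    case True
    then show ?thesis unfolding mat_pow_int_def using pow_nonneg[OF assms(3), of n a "nat s"] by simp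
  next
    case False
    then have inv: "invertible_mat (Adag n a b)" using assms(4) by simp
    show ?thesis unfolding mat_pow_int_def using False pow_neg[OF assms(3) n inv, of "nat (- s)"] by simp
  qed
  have ij: "i - 1 < n" "j - 1 < n" using assms(5,6) by auto
  show ?thesis unfolding M using ij by (simp add: Mm_def wv_def mult_ac)
qed

end
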